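(* For every integer $k\ge 2$, no graph $G\in\mathcal{H}_k$ contains $K_{2,k+2}$ as a minor.
   Context: All graphs are finite; parallel edges are allowed, loops are not. A length-function on a graph $G$ is a map $\ell:E(G)\to\mathbb{R}^+$ (strictly positive reals); $\ell(H)=\sum_{e\in E(H)}\ell(e)$ for subgraphs $H$, which carry the restricted length-function. $\mathrm{sd}_G(A)$ is the minimum of $\ell(S)$ over connected subgraphs $S\subseteq G$ with $A\subseteq V(S)$ ($\infty$ if none). $H\subseteq G$ is $k$-geodesic in $G$ if $\mathrm{sd}_H(A)=\mathrm{sd}_G(A)$ for all $A\subseteq V(H)$ with $|A|\le k$, and fully geodesic if it is $k$-geodesic for all $k$. For $k\ge2$, $\mathcal{H}_k$ is the class of all graphs $H$ such that for every graph $G\supseteq H$ and every length-function on $G$ for which $H$ is $k$-geodesic in $G$, $H$ is fully geodesic in $G$. *)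

theory Defs
  imports Complex_Main "HOL-Library.Extended_Real"
begin

text \<open>Finite multigraphs (parallel edges allowed, no loops). Vertices and edges are
  labelled by natural numbers, so that every finite graph and every finite supergraph of
  a given graph can be represented (up to isomorphism).\<close>

record mgraph =
  verts :: "nat set"
  edges :: "nat set"
  ends  :: "nat \<Rightarrow> nat set"

definition is_graph :: "mgraph \<Rightarrow> bool" where
  "is_graph G \<longleftrightarrow> finite (verts G) \<and> finite (edges G) \<and>
     (\<forall>e\<in>edges G. ends G e \<subseteq> verts G \<and> card (ends G e) = 2)"

definition subgraph :: "mgraph \<Rightarrow> mgraph \<Rightarrow> bool" where
  "subgraph H G \<longleftrightarrow> is_graph H \<and> is_graph G \<and> verts H \<subseteq> verts G \<and>
     edges H \<subseteq> edges G \<and> (\<forall>e\<in>edges H. ends H e = ends G e)"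

definition step_in :: "mgraph \<Rightarrow> nat set \<Rightarrow> nat \<Rightarrow> nat \<Rightarrow> bool" where
  "step_in G B x y \<longleftrightarrow> x \<in> B \<and> y \<in> B \<and> (\<exists>e\<in>edges G. ends G e = {x, y})"

definition connected_in :: "mgraph \<Rightarrow> nat set \<Rightarrow> bool" where
  "connected_in G B \<longleftrightarrow> (\<forall>x\<in>B. \<forall>y\<in>B. (step_in G B)\<^sup>*\<^sup>* x y)"

definition connected_graph :: "mgraph \<Rightarrow> bool" where
  "connected_graph S \<longleftrightarrow> connected_in S (verts S)"

definition length_fun :: "mgraph \<Rightarrow> (nat \<Rightarrow> real) \<Rightarrow> bool" where
  "length_fun G l \<longleftrightarrow> (\<forall>e\<in>edges G. l e > 0)"

text \<open>Steiner distance sd_G(A): minimum length of a connected subgraph of G containing A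
  (infinity if none; the minimum is attained since there are finitely many values).\<close>
definition sd :: "mgraph \<Rightarrow> (nat \<Rightarrow> real) \<Rightarrow> nat set \<Rightarrow> ereal" where
  "sd G l A = Inf {ereal (\<Sum>e\<in>edges S. l e) | S. subgraph S G \<and> connected_graph S \<and> A \<subseteq> verts S}"

definition k_geodesic :: "nat \<Rightarrow> mgraph \<Rightarrow> mgraph \<Rightarrow> (nat \<Rightarrow> real) \<Rightarrow> bool" where
  "k_geodesic k H G l \<longleftrightarrow> (\<forall>A. A \<subseteq> verts H \<and> card A \<le> k \<longrightarrow> sd H l A = sd G l A)"

definition fully_geodesic :: "mgraph \<Rightarrow> mgraph \<Rightarrow> (nat \<Rightarrow> real) \<Rightarrow> bool" where
  "fully_geodesic H G l \<longleftrightarrow> (\<forall>k. k_geodesic k H G l)"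

definition class_H :: "nat \<Rightarrow> mgraph set" where
  "class_H k = {H. is_graph H \<and>
     (\<forall>G l. subgraph H G \<and> length_fun G l \<and> k_geodesic k H G l \<longrightarrow> fully_geodesic H G l)}"

definition has_minor :: "mgraph \<Rightarrow> 'w set \<Rightarrow> ('w \<Rightarrow> 'w \<Rightarrow> bool) \<Rightarrow> bool" where
  "has_minor G W adj \<longleftrightarrow> (\<exists>B :: 'w \<Rightarrow> nat set.
     (\<forall>w\<in>W. B w \<noteq> {} \<and> B w \<subseteq> verts G \<and> connected_in G (B w)) \<and>
     (\<forall>w\<in>W. \<forall>w'\<in>W. w \<noteq> w' \<longrightarrow> B w \<inter> B w' = {}) \<and>
     (\<forall>w\<in>W. \<forall>w'\<in>W. adj w w' \<longrightarrow>
        (\<exists>e\<in>edges G. \<exists>x\<in>B w. \<exists>y\<in>B w'. ends G e = {x, y})))"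

definition K2_verts :: "nat \<Rightarrow> (bool + nat) set" where
  "K2_verts n = range Inl \<union> Inr ` {..<n}"

definition K2_adj :: "bool + nat \<Rightarrow> bool + nat \<Rightarrow> bool" where
  "K2_adj u v \<longleftrightarrow> isl u \<noteq> isl v"

definition has_K2n_minor :: "mgraph \<Rightarrow> nat \<Rightarrow> bool" where
  "has_K2n_minor G n \<longleftrightarrow> has_minor G (K2_verts n) K2_adj"

end

theory Submission
  imports Defs
begin

lemma step_in_sym: "step_in S V x y \<Longrightarrow> step_in S V y x"
  unfolding step_in_def by (auto simp: insert_commute)

lemma rtc_sym: "(step_in S V)\<^sup>*\<^sup>* x y \<Longrightarrow> (step_in S V)\<^sup>*\<^sup>* y x"
proof (induction rule: rtranclp_induct)
  case base then show ?case by simp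
next
  case (step y z)
  then show ?case by (meson converse_rtranclp_into_rtranclp step_in_sym)
qed

lemma connected_root:
  assumes "\<And>v. v \<in> V \<Longrightarrow> (step_in S V)\<^sup>*\<^sup>* r v"
  shows "connected_in S V"
  unfolding connected_in_def
  by (meson assms rtc_sym rtranclp_trans)

lemma rtc_lift:
  assumes "(step_in S V)\<^sup>*\<^sup>* x y"
    and "\<And>a b. (step_in S V)\<^sup>*\<^sup>* x a \<Longrightarrow> step_in S V a b \<Longrightarrow> step_in T W a b"
  shows "(step_in T W)\<^sup>*\<^sup>* x y"
  using assms(1) 
proof (induction rule: rtranclp_induct)
  case base then show ?case by simp
next
  case (step y z) then show ?case using assms(2) by (meson rtranclp.rtrancl_into_rtrancl)
qed

lemma cut_edge:
  assumes c: "connected_graph S" and x: "x \<in> verts S" "x \<in> X" and y: "y \<in> verts S" "y \<notin> X"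
  shows "\<exists>e\<in>edges S. \<exists>p q. ends S e = {p,q} \<and> p \<in> X \<and> q \<notin> X"
proof -
  have r: "(step_in S (verts S))\<^sup>*\<^sup>* x y" using c x y unfolding connected_graph_def connected_in_def by blast
  have "\<And>z. (step_in S (verts S))\<^sup>*\<^sup>* x z \<Longrightarrow> z \<in> X \<or> (\<exists>e\<in>edges S. \<exists>p q. ends S e = {p,q} \<and> p \<in> X \<and> q \<notin> X)"
  proof -
    fix z assume "(step_in S (verts S))\<^sup>*\<^sup>* x z"
    then show "z \<in> X \<or> (\<exists>e\<in>edges S. \<exists>p q. ends S e = {p,q} \<and> p \<in> X \<and> q \<notin> X)"
    proof (induction rule: rtranclp_induct)
      case base then show ?case using x by simp
    next
      case (step a b) then show ?case unfolding step_in_def by blast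
    qed
  qed
  then show ?thesis using r y by blast
qed

lemma sd_le:
  assumes "subgraph S G" "connected_graph S" "A \<subseteq> verts S"
  shows "sd G l A \<le> ereal (\<Sum>e\<in>edges S. l e)"
  unfolding sd_def by (rule Inf_lower) (use assms in blast)

lemma sd_ge:
  assumes "\<And>S. subgraph S G \<Longrightarrow> connected_graph S \<Longrightarrow> A \<subseteq> verts S \<Longrightarrow> b \<le> (\<Sum>e\<in>edges S. l e)"
  shows "ereal b \<le> sd G l A"
  unfolding sd_def by (rule Inf_greatest) (use assms in auto)

lemma sd_mono:
  assumes "\<And>S. subgraph S G \<Longrightarrow> connected_graph S \<Longrightarrow> A \<subseteq> verts S \<Longrightarrow>
     \<exists>S'. subgraph S' H \<and> connected_graph S' \<and> A \<subseteq> verts S' \<and> (\<Sum>e\<in>edges S'. l e) \<le> (\<Sum>e\<in>edges S. l e)"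
  shows "sd H l A \<le> sd G l A"
  unfolding sd_def
proof (rule Inf_greatest)
  fix x assume "x \<in> {ereal (\<Sum>e\<in>edges S. l e) |S. subgraph S G \<and> connected_graph S \<and> A \<subseteq> verts S}"
  then obtain S where S: "subgraph S G" "connected_graph S" "A \<subseteq> verts S" "x = ereal (\<Sum>e\<in>edges S. l e)" by blast
  obtain S' where S': "subgraph S' H" "connected_graph S'" "A \<subseteq> verts S'" "(\<Sum>e\<in>edges S'. l e) \<le> (\<Sum>e\<in>edges S. l e)"
    using assms S by blast
  have "Inf {ereal (\<Sum>e\<in>edges S. l e) |S. subgraph S H \<and> connected_graph S \<and> A \<subseteq> verts S} \<le> ereal (\<Sum>e\<in>edges S'. l e)"
    by (rule Inf_lower) (use S' in blast)
  also have "\<dots> \<le> x" using S S' by simp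
  finally show "Inf {ereal (\<Sum>e\<in>edges S. l e) |S. subgraph S H \<and> connected_graph S \<and> A \<subseteq> verts S} \<le> x" .
qed

locale ctx =
  fixes H :: mgraph and k :: nat and B :: "bool + nat \<Rightarrow> nat set"
  assumes gH: "is_graph H" and k2: "2 \<le> k"
  and Bprop: "\<forall>w\<in>K2_verts (k+2). B w \<noteq> {} \<and> B w \<subseteq> verts H \<and> connected_in H (B w)"
  and Bdisj: "\<forall>w\<in>K2_verts (k+2). \<forall>w'\<in>K2_verts (k+2). w \<noteq> w' \<longrightarrow> B w \<inter> B w' = {}"
  and Badj: "\<forall>w\<in>K2_verts (k+2). \<forall>w'\<in>K2_verts (k+2). K2_adj w w' \<longrightarrow>
        (\<exists>e\<in>edges H. \<exists>x\<in>B w. \<exists>y\<in>B w'. ends H e = {x, y})"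
begin

definition "W0 = range Inl \<union> Inr ` {..<k}"

lemma W0_sub: "W0 \<subseteq> K2_verts (k+2)"
  unfolding W0_def K2_verts_def by auto

lemma inW0[simp]: "Inl h \<in> W0" "i < k \<Longrightarrow> Inr i \<in> W0"
  unfolding W0_def by auto

lemma disj: "w \<in> W0 \<Longrightarrow> w' \<in> W0 \<Longrightarrow> x \<in> B w \<Longrightarrow> x \<in> B w' \<Longrightarrow> w = w'"
  using Bdisj W0_sub by blast

lemma Bne: "w \<in> W0 \<Longrightarrow> B w \<noteq> {}" and Bsub: "w \<in> W0 \<Longrightarrow> B w \<subseteq> verts H"
  and Bconn: "w \<in> W0 \<Longrightarrow> connected_in H (B w)"
  using Bprop W0_sub by blast+

lemma adj: "i < k \<Longrightarrow> \<exists>e\<in>edges H. \<exists>x\<in>B (Inl h). \<exists>y\<in>B (Inr i). ends H e = {x,y}"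
proof -
  assume "i < k"
  then have "Inl h \<in> K2_verts (k+2)" "Inr i \<in> K2_verts (k+2)" using W0_sub by auto
  moreover have "K2_adj (Inl h) (Inr i)" unfolding K2_adj_def by simp
  ultimately show ?thesis using Badj by blast
qed

definition conn :: "bool \<Rightarrow> nat \<Rightarrow> nat \<Rightarrow> bool" where
  "conn h i e \<longleftrightarrow> (\<exists>x\<in>B (Inl h). \<exists>y\<in>B (Inr i). ends H e = {x,y})"
definition internal :: "nat \<Rightarrow> bool" where
  "internal e \<longleftrightarrow> (\<exists>w\<in>W0. ends H e \<subseteq> B w)"

lemma conn_uniq: "conn h i e \<Longrightarrow> conn h' j e \<Longrightarrow> i < k \<Longrightarrow> j < k \<Longrightarrow> h = h' \<and> i = j"
proof -
  assume a: "conn h i e" "conn h' j e" "i < k" "j < k"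
  then obtain x y x' y' where xy: "x \<in> B (Inl h)" "y \<in> B (Inr i)" "x' \<in> B (Inl h')" "y' \<in> B (Inr j)"
    "{x,y} = {x',y'}" unfolding conn_def by metis
  then consider "x = x'" "y = y'" | "x = y'" "y = x'" by (metis doubleton_eq_iff)
  then show ?thesis
  proof cases
    case 1 then show ?thesis using disj[of "Inl h" "Inl h'" x] disj[of "Inr i" "Inr j" y] xy a by auto
  next
    case 2 then show ?thesis using disj[of "Inl h" "Inr j" x] xy a by auto
  qed
qed

lemma conn_internal: "conn h i e \<Longrightarrow> internal e \<Longrightarrow> i < k \<Longrightarrow> False"
proof -
  assume a: "conn h i e" "internal e" "i < k"
  then obtain x y w where xy: "x \<in> B (Inl h)" "y \<in> B (Inr i)" "ends H e = {x,y}" "w \<in> W0" "ends H e \<subseteq> B w"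
    unfolding conn_def internal_def by metis
  then have "w = Inl h" "w = Inr i" using disj[of w "Inl h" x] disj[of w "Inr i" y] a by auto
  then show False by simp
qed

definition "dlt = 1 / (2 * (real k + 1))"
definition "cc = real k - 1 + dlt"
definition "eps = dlt / (real (card (edges H)) + 1)"
definition "lH e = (if \<exists>i<k. conn False i e then real k else if \<exists>i<k. conn True i e then real k - 1
    else if internal e then eps else real k ^ 2)"
definition "u = Suc (Max (insert 0 (verts H)))"
definition "E0 = Suc (Max (insert 0 (edges H)))"
definition "alpha = (SOME x. x \<in> B (Inl False))"
definition "zeta i = (SOME x. x \<in> B (Inr i))"
definition "p j = (if j = 0 then alpha else zeta (j - 1))"
definition "G' = \<lparr>verts = insert u (verts H), edges = edges H \<union> {E0..E0+k},
   ends = (\<lambda>e. if E0 \<le> e then {u, p (e - E0)} else ends H e)\<rparr>"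
definition "l e = (if E0 \<le> e then cc else lH e)"

lemma finH: "finite (verts H)" "finite (edges H)" using gH unfolding is_graph_def by auto

lemma u_notin: "u \<notin> verts H"
proof
  assume "u \<in> verts H"
  then have "u \<le> Max (insert 0 (verts H))" using finH by simp
  then show False unfolding u_def by simp
qed

lemma E0_gt: "e \<in> edges H \<Longrightarrow> e < E0"
  unfolding E0_def using finH by (simp add: le_imp_less_Suc)

lemma dlt_pos: "dlt > 0" and dlt_small: "(real k + 1) * dlt = 1/2"
  unfolding dlt_def by auto

lemma eps_pos: "eps > 0" unfolding eps_def using dlt_pos by auto
lemma eps_N: "real (card (edges H)) * eps \<le> dlt"
proof -
  have "real (card (edges H)) * eps = dlt * (real (card (edges H)) / (real (card (edges H)) + 1))"
    unfolding eps_def by simp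
  also have "\<dots> \<le> dlt * 1" using dlt_pos by (intro mult_left_mono) auto
  finally show ?thesis by simp
qed

lemma kreal: "real k \<ge> 2" using k2 by simp

lemma cc_pos: "cc > 0" unfolding cc_def using kreal dlt_pos by simp

lemma l_pos: "l e > 0"
  unfolding l_def lH_def using cc_pos eps_pos kreal by auto

lemma l_H: "e \<in> edges H \<Longrightarrow> l e = lH e" unfolding l_def using E0_gt by force

lemma lH_a: "i < k \<Longrightarrow> conn False i e \<Longrightarrow> lH e = real k" unfolding lH_def by auto
lemma lH_b: "i < k \<Longrightarrow> conn True i e \<Longrightarrow> lH e = real k - 1"
proof -
  assume a: "i < k" "conn True i e"
  have "\<not> (\<exists>j<k. conn False j e)" using conn_uniq a by blast
  then show ?thesis unfolding lH_def using a by auto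
qed
lemma lH_int: "internal e \<Longrightarrow> lH e = eps"
proof -
  assume a: "internal e"
  have n1: "\<not> (\<exists>j<k. conn False j e)" and n2: "\<not> (\<exists>j<k. conn True j e)" using conn_internal a by blast+
  show ?thesis unfolding lH_def by (subst if_not_P[OF n1], subst if_not_P[OF n2], simp add: a)
qed

lemma alpha_in: "alpha \<in> B (Inl False)" unfolding alpha_def using Bne[of "Inl False"] by (simp add: some_in_eq)
lemma zeta_in: "i < k \<Longrightarrow> zeta i \<in> B (Inr i)" unfolding zeta_def using Bne[of "Inr i"] by (simp add: some_in_eq)

end

lemma sum_Un_le_pos: "finite A \<Longrightarrow> finite B \<Longrightarrow> (\<And>x. 0 \<le> (f x::real)) \<Longrightarrow> sum f (A \<union> B) \<le> sum f A + sum f B"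
  by (simp add: sum_Un sum_nonneg)

context ctx begin

definition mkH :: "nat set \<Rightarrow> nat set \<Rightarrow> mgraph" where
  "mkH V E = \<lparr>verts = V, edges = E, ends = ends H\<rparr>"

lemma mkH_sel[simp]: "verts (mkH V E) = V" "edges (mkH V E) = E" "ends (mkH V E) = ends H"
  unfolding mkH_def by auto

lemma mkH_sub: "V \<subseteq> verts H \<Longrightarrow> E \<subseteq> edges H \<Longrightarrow> (\<And>e. e \<in> E \<Longrightarrow> ends H e \<subseteq> V) \<Longrightarrow> subgraph (mkH V E) H"
  using gH unfolding subgraph_def is_graph_def
  by (auto intro: finite_subset)

lemma p_img: "p ` {..k} = insert alpha (zeta ` {..<k})"
proof (rule set_eqI, rule iffI)
  fix x assume "x \<in> p ` {..k}"
  then obtain j where j: "j \<le> k" "x = p j" by auto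
  show "x \<in> insert alpha (zeta ` {..<k})"
  proof (cases "j = 0")
    case True then show ?thesis using j unfolding p_def by simp
  next
    case False then have "j - 1 < k" using j by simp
    then show ?thesis using j False unfolding p_def by simp
  qed
next
  fix x assume "x \<in> insert alpha (zeta ` {..<k})"
  then consider "x = alpha" | i where "i < k" "x = zeta i" by auto
  then show "x \<in> p ` {..k}"
  proof cases
    case 1 then have "x = p 0" unfolding p_def by simp
    then show ?thesis by blast
  next
    case 2 then have "x = p (Suc i)" "Suc i \<le> k" unfolding p_def by simp_all
    then show ?thesis by blast
  qed
qed

lemma zeta_inj: "inj_on zeta {..<k}"
proof (rule inj_onI)
  fix i j assume "i \<in> {..<k}" "j \<in> {..<k}" "zeta i = zeta j"
  then have "Inr i = Inr j" using zeta_in[of i] zeta_in[of j] disj[of "Inr i" "Inr j"] by simp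
  then show "i = j" by simp
qed

lemma alpha_notin: "alpha \<notin> zeta ` {..<k}"
proof
  assume "alpha \<in> zeta ` {..<k}"
  then obtain i where "i < k" "alpha = zeta i" by auto
  then have "Inl False = Inr i" using zeta_in[of i] alpha_in disj[of "Inl False" "Inr i"] by simp
  then show False by simp
qed

lemma p_verts: "j \<le> k \<Longrightarrow> p j \<in> verts H"
proof -
  assume "j \<le> k"
  then have "p j \<in> insert alpha (zeta ` {..<k})" using p_img by blast
  moreover have "alpha \<in> verts H" using alpha_in Bsub[of "Inl False"] by auto
  moreover have "zeta i \<in> verts H" if "i < k" for i using zeta_in[OF that] Bsub[of "Inr i"] that by auto
  ultimately show ?thesis by auto
qed

lemma l_nn: "0 \<le> l e" using l_pos[of e] by simp

lemma hub_tree: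
  assumes I: "I \<subseteq> {..<k}"
  shows "\<exists>T. subgraph T H \<and> connected_graph T \<and> B (Inl h) \<union> (\<Union>i\<in>I. B (Inr i)) \<subseteq> verts T \<and>
     (\<Sum>e\<in>edges T. l e) \<le> dlt + real (card I) * (if h then real k - 1 else real k)"
proof -
  define ce where "ce i = (SOME e. e \<in> edges H \<and> conn h i e)" for i
  have ce: "ce i \<in> edges H \<and> conn h i (ce i)" if "i \<in> I" for i
  proof -
    have "\<exists>e. e \<in> edges H \<and> conn h i e" using adj[of i h] that I unfolding conn_def by blast
    then show ?thesis unfolding ce_def by (rule someI_ex)
  qed
  define WS where "WS = insert (Inl h) (Inr ` I)"
  have WS0: "WS \<subseteq> W0" using I unfolding WS_def by auto
  define V where "V = B (Inl h) \<union> (\<Union>i\<in>I. B (Inr i))"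
  have V_eq: "V = (\<Union>w\<in>WS. B w)" unfolding V_def WS_def by auto
  define Ei where "Ei = {e\<in>edges H. \<exists>w\<in>WS. ends H e \<subseteq> B w}"
  define T where "T = mkH V (Ei \<union> ce ` I)"
  have VH: "V \<subseteq> verts H" unfolding V_eq
  proof (rule UN_least)
    fix w assume "w \<in> WS" then show "B w \<subseteq> verts H" using Bsub WS0 by blast
  qed
  have ends_ce: "ends H (ce i) \<subseteq> V" if ii: "i \<in> I" for i
  proof -
    obtain x y where "x \<in> B (Inl h)" "y \<in> B (Inr i)" "ends H (ce i) = {x,y}"
      using ce[OF ii] unfolding conn_def by blast
    then show ?thesis using ii unfolding V_def by auto
  qed
  have ends_Ei: "ends H e \<subseteq> V" if ee: "e \<in> Ei" for e
  proof -
    obtain w where "w \<in> WS" "ends H e \<subseteq> B w" using ee unfolding Ei_def by blast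
    then show ?thesis unfolding V_eq by blast
  qed
  have sub: "subgraph T H" unfolding T_def
  proof (rule mkH_sub)
    show "V \<subseteq> verts H" by (rule VH)
    show "Ei \<union> ce ` I \<subseteq> edges H" unfolding Ei_def using ce by blast
    fix e assume "e \<in> Ei \<union> ce ` I" then show "ends H e \<subseteq> V" using ends_ce ends_Ei by blast
  qed
  have step: "step_in T V a b" if st: "step_in H (B w) a b" "w \<in> WS" for w a b
  proof -
    obtain e where e: "a \<in> B w" "b \<in> B w" "e \<in> edges H" "ends H e = {a,b}"
      using st unfolding step_in_def by blast
    then have "e \<in> Ei" unfolding Ei_def using st(2) by auto
    moreover have "a \<in> V" "b \<in> V" using e st(2) V_eq by blast+
    ultimately show ?thesis unfolding step_in_def T_def mkH_sel using e by blast
  qed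
  have lift: "(step_in T V)\<^sup>*\<^sup>* a b" if "(step_in H (B w))\<^sup>*\<^sup>* a b" "w \<in> WS" for w a b
    using that(1) by (rule rtc_lift) (use step that(2) in blast)
  obtain r where r: "r \<in> B (Inl h)" using Bne[of "Inl h"] by auto
  have reach: "(step_in T V)\<^sup>*\<^sup>* r v" if vV: "v \<in> V" for v
  proof -
    have hW: "Inl h \<in> WS" unfolding WS_def by simp
    have rB: "(step_in T V)\<^sup>*\<^sup>* r x" if xB: "x \<in> B (Inl h)" for x
    proof -
      have "(step_in H (B (Inl h)))\<^sup>*\<^sup>* r x" using Bconn[OF inW0(1)] r xB unfolding connected_in_def by blast
      then show ?thesis by (rule lift[OF _ hW])
    qed
    show ?thesis
    proof (cases "v \<in> B (Inl h)")
      case True then show ?thesis using rB by blast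
    next
      case False
      then obtain i where i: "i \<in> I" "v \<in> B (Inr i)" using vV unfolding V_def by blast
      then have iW: "Inr i \<in> WS" and ik: "i < k" unfolding WS_def using I by auto
      obtain x y where xy: "x \<in> B (Inl h)" "y \<in> B (Inr i)" "ends H (ce i) = {x,y}"
        using ce[OF i(1)] unfolding conn_def by blast
      have "x \<in> V" "y \<in> V" using xy i(1) unfolding V_def by blast+
      moreover have "ce i \<in> Ei \<union> ce ` I" using i(1) by blast
      ultimately have "step_in T V x y" unfolding step_in_def T_def mkH_sel using xy(3) by metis
      moreover have "(step_in T V)\<^sup>*\<^sup>* y v"
      proof -
        have "(step_in H (B (Inr i)))\<^sup>*\<^sup>* y v" using Bconn[OF inW0(2)[OF ik]] xy(2) i(2) unfolding connected_in_def by blast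
        then show ?thesis by (rule lift[OF _ iW])
      qed
      ultimately show ?thesis using rB[OF xy(1)]
        by (meson converse_rtranclp_into_rtranclp rtranclp_trans)
    qed
  qed
  have conT: "connected_graph T" unfolding connected_graph_def T_def mkH_sel
    by (rule connected_root[of V _ r]) (use reach in \<open>simp add: T_def\<close>)
  have finEi: "finite Ei" unfolding Ei_def using finH by simp
  have finI: "finite I" using I finite_subset by blast
  have c1: "(\<Sum>e\<in>edges T. l e) \<le> (\<Sum>e\<in>Ei. l e) + (\<Sum>e\<in>ce ` I. l e)"
    unfolding T_def mkH_sel by (rule sum_Un_le_pos[OF finEi]) (use finI l_nn in auto)
  have c2: "(\<Sum>e\<in>Ei. l e) = (\<Sum>e\<in>Ei. eps)"
  proof (rule sum.cong)
    fix e assume "e \<in> Ei"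
    then have "internal e" "e \<in> edges H" unfolding Ei_def internal_def using WS0 by blast+
    then show "l e = eps" using l_H lH_int by simp
  qed simp
  have c3: "real (card Ei) \<le> real (card (edges H))"
    using card_mono[OF finH(2), of Ei] unfolding Ei_def by simp
  have c4: "real (card Ei) * eps \<le> real (card (edges H)) * eps"
    using c3 eps_pos by (simp add: mult_right_mono)
  have c5: "(\<Sum>e\<in>ce ` I. l e) \<le> (\<Sum>i\<in>I. l (ce i))"
    using sum_image_le[OF finI, of l ce] l_nn by (simp add: comp_def)
  have c6: "(\<Sum>i\<in>I. l (ce i)) = (\<Sum>i\<in>I. (if h then real k - 1 else real k))"
  proof (rule sum.cong)
    fix i assume i: "i \<in> I"
    then have ik: "i < k" using I by auto
    show "l (ce i) = (if h then real k - 1 else real k)"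
    proof (cases h)
      case True then show ?thesis using ce[OF i] l_H lH_b[OF ik] by simp
    next
      case False then show ?thesis using ce[OF i] l_H lH_a[OF ik] by simp
    qed
  qed simp
  have c7: "(\<Sum>i\<in>I. (if h then real k - 1 else real k)) = real (card I) * (if h then real k - 1 else real k)"
    by simp
  have cost: "(\<Sum>e\<in>edges T. l e) \<le> dlt + real (card I) * (if h then real k - 1 else real k)"
    using c1 c2 c4 c5 c6 c7 eps_N by simp
  have "B (Inl h) \<union> (\<Union>i\<in>I. B (Inr i)) \<subseteq> verts T" unfolding T_def V_def by simp
  then show ?thesis using sub conT cost by blast
qed

end

context ctx begin

lemma T_exists:
  assumes Q: "Q \<subseteq> p ` {..k}" "Q \<noteq> {}" "card Q \<le> k"
  shows "\<exists>T. subgraph T H \<and> connected_graph T \<and> Q \<subseteq> verts T \<and> (\<Sum>e\<in>edges T. l e) \<le> cc * real (card Q)"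
proof -
  define I where "I = {i. i < k \<and> zeta i \<in> Q}"
  have I: "I \<subseteq> {..<k}" by (auto simp: I_def)
  have finI: "finite I" using I finite_subset by blast
  have Qeq: "Q - {alpha} = zeta ` I"
  proof
    show "Q - {alpha} \<subseteq> zeta ` I" using Q(1) unfolding p_img I_def by auto
    show "zeta ` I \<subseteq> Q - {alpha}" using alpha_notin unfolding I_def by (auto simp: image_iff) (metis lessThan_iff)
  qed
  have cardI: "card (zeta ` I) = card I" using zeta_inj I by (simp add: card_image inj_on_subset)
  have an: "alpha \<notin> zeta ` I" using alpha_notin I by blast
  have dd: "dlt > 0" by (rule dlt_pos)
  show ?thesis
  proof (cases "alpha \<in> Q")
    case True
    then have Qe: "Q = insert alpha (zeta ` I)" using Qeq by blast
    then have cQ: "card Q = Suc (card I)" using an cardI finI by simp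
    obtain T where T: "subgraph T H" "connected_graph T" "B (Inl False) \<union> (\<Union>i\<in>I. B (Inr i)) \<subseteq> verts T"
      "(\<Sum>e\<in>edges T. l e) \<le> dlt + real (card I) * (if False then real k - 1 else real k)"
      using hub_tree[OF I, of False] by blast
    have "Q \<subseteq> verts T"
    proof
      fix q assume "q \<in> Q"
      then consider "q = alpha" | i where "i \<in> I" "q = zeta i" using Qe by blast
      then show "q \<in> verts T"
      proof cases
        case 1 then show ?thesis using alpha_in T(3) by blast
      next
        case 2 then have "q \<in> B (Inr i)" using zeta_in I by blast
        then show ?thesis using 2 T(3) by blast
      qed
    qed
    moreover
    have nk: "real (card I) \<le> real k - 1" using cQ Q(3) by simp
    have e1: "cc * real (card Q) = (real k - 1) * real (card I) + (real k - 1) + dlt * real (card I) + dlt"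
      unfolding cQ cc_def by (simp add: algebra_simps)
    have e2: "dlt * real (card I) \<ge> 0" using dd by simp
    have e3: "real (card I) * real k = (real k - 1) * real (card I) + real (card I)" by (simp add: algebra_simps)
    have "(\<Sum>e\<in>edges T. l e) \<le> cc * real (card Q)" using T(4) e1 e2 e3 nk by simp
    ultimately show ?thesis using T(1,2) by blast
  next
    case False
    then have Qe: "Q = zeta ` I" using Qeq by blast
    then have cQ: "card Q = card I" using cardI by simp
    have n1: "real (card I) \<ge> 1" using Q(2) Qe finI cQ by (simp add: Suc_le_eq card_gt_0_iff)
    obtain T where T: "subgraph T H" "connected_graph T" "B (Inl True) \<union> (\<Union>i\<in>I. B (Inr i)) \<subseteq> verts T"
      "(\<Sum>e\<in>edges T. l e) \<le> dlt + real (card I) * (if True then real k - 1 else real k)"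
      using hub_tree[OF I, of True] by blast
    have "Q \<subseteq> verts T"
    proof
      fix q assume "q \<in> Q"
      then obtain i where i: "i \<in> I" "q = zeta i" using Qe by blast
      then have "q \<in> B (Inr i)" using zeta_in I by blast
      then show "q \<in> verts T" using i T(3) by blast
    qed
    moreover
    have e1: "cc * real (card Q) = (real k - 1) * real (card I) + dlt * real (card I)"
      unfolding cQ cc_def by (simp add: algebra_simps)
    have e2: "dlt * real (card I) \<ge> dlt" using dd n1 by simp
    have "(\<Sum>e\<in>edges T. l e) \<le> cc * real (card Q)" using T(4) e1 e2 by (simp add: algebra_simps)
    ultimately show ?thesis using T(1,2) by blast
  qed
qed

end

context ctx begin

lemma G'_sel: "verts G' = insert u (verts H)" "edges G' = edges H \<union> {E0..E0+k}"
  "ends G' e = (if E0 \<le> e then {u, p (e - E0)} else ends H e)"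
  unfolding G'_def by auto

lemma ends_G'_H: "e \<in> edges H \<Longrightarrow> ends G' e = ends H e"
  using E0_gt[of e] unfolding G'_sel by simp

lemma p_ne_u: "j \<le> k \<Longrightarrow> p j \<noteq> u" using p_verts u_notin by metis

lemma gG': "is_graph G'"
  unfolding is_graph_def
proof (intro conjI)
  show "finite (verts G')" "finite (edges G')" using finH unfolding G'_sel by auto
  show "\<forall>e\<in>edges G'. ends G' e \<subseteq> verts G' \<and> card (ends G' e) = 2"
  proof
  fix e assume e: "e \<in> edges G'"
  show "ends G' e \<subseteq> verts G' \<and> card (ends G' e) = 2"
  proof (cases "e \<in> edges H")
    case True
    then show ?thesis using gH ends_G'_H[OF True] unfolding is_graph_def G'_sel(1) by auto
  next
    case False
    then have "E0 \<le> e" "e - E0 \<le> k" using e unfolding G'_sel by auto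
    then have "p (e - E0) \<noteq> u" "p (e - E0) \<in> verts H" using p_verts p_ne_u by auto
    then show ?thesis unfolding G'_sel using \<open>E0 \<le> e\<close> by auto
  qed
  qed
qed

lemma sub_lift: "subgraph S H \<Longrightarrow> subgraph S G'"
proof -
  assume s: "subgraph S H"
  then have "\<forall>e\<in>edges S. ends S e = ends G' e" using ends_G'_H unfolding subgraph_def by auto
  then show ?thesis using s gG' unfolding subgraph_def G'_sel(1,2) by blast
qed

lemma subHG: "subgraph H G'"
  using sub_lift gH unfolding subgraph_def by auto

lemma notH: "e \<in> edges G' \<Longrightarrow> e \<notin> edges H \<Longrightarrow> E0 \<le> e \<and> e - E0 \<le> k \<and> ends G' e = {u, p (e - E0)}"
  unfolding G'_sel by auto

lemma lfun: "length_fun G' l" unfolding length_fun_def using l_pos by auto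

lemma l_new: "E0 \<le> e \<Longrightarrow> l e = cc" unfolding l_def by simp

end

lemma rtc_stay: "(step_in S V)\<^sup>*\<^sup>* x y \<Longrightarrow> x \<in> V \<Longrightarrow> y \<in> V"
  by (induction rule: rtranclp_induct) (auto simp: step_in_def)

context ctx begin

lemma replace:
  assumes S: "subgraph S G'" and cS: "connected_graph S" and AS: "A \<subseteq> verts S"
    and AH: "A \<subseteq> verts H" and cA: "card A \<le> k"
  shows "\<exists>S'. subgraph S' H \<and> connected_graph S' \<and> A \<subseteq> verts S' \<and> (\<Sum>e\<in>edges S'. l e) \<le> (\<Sum>e\<in>edges S. l e)"
proof -
  have gS: "is_graph S" and vS: "verts S \<subseteq> insert u (verts H)" and eS: "edges S \<subseteq> edges G'"
    and enS: "\<And>e. e \<in> edges S \<Longrightarrow> ends S e = ends G' e" using S unfolding subgraph_def G'_sel by auto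
  have finS: "finite (edges S)" using gS unfolding is_graph_def by auto
  have endsS: "\<And>e. e \<in> edges S \<Longrightarrow> ends S e \<subseteq> verts S" using gS unfolding is_graph_def by auto
  have nnS: "0 \<le> (\<Sum>e\<in>edges S. l e)" using l_nn by (simp add: sum_nonneg)
  show ?thesis
  proof (cases "A = {}")
    case True
    have "subgraph (mkH {} {}) H" by (rule mkH_sub) auto
    moreover have "connected_graph (mkH {} {})" unfolding connected_graph_def connected_in_def by simp
    ultimately show ?thesis using True nnS by (intro exI[of _ "mkH {} {}"]) auto
  next
    case Ane: False
    show ?thesis
    proof (cases "u \<in> verts S")
      case False
      have eH: "edges S \<subseteq> edges H"
      proof
        fix e assume e: "e \<in> edges S"
        show "e \<in> edges H"
        proof (rule ccontr)
          assume "e \<notin> edges H"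
          then have "u \<in> ends G' e" using notH[of e] eS e by auto
          then show False using endsS[OF e] enS[OF e] False by auto
        qed
      qed
      have vH: "verts S \<subseteq> verts H" using vS False by auto
      have enH: "\<And>e. e \<in> edges S \<Longrightarrow> ends S e = ends H e" using enS eH ends_G'_H by auto
      define S' where "S' = mkH (verts S) (edges S)"
      have vS': "verts S' = verts S" unfolding S'_def by simp
      have "subgraph S' H" unfolding S'_def by (rule mkH_sub) (use vH eH endsS enH in auto)
      moreover have "connected_graph S'"
      proof -
        have st: "step_in S' (verts S) a b" if "step_in S (verts S) a b" for a b
          using that enH unfolding step_in_def S'_def mkH_sel by metis
        show ?thesis unfolding connected_graph_def connected_in_def
        proof (intro ballI)
          fix x y assume "x \<in> verts S'" "y \<in> verts S'"
          then have "(step_in S (verts S))\<^sup>*\<^sup>* x y" using cS unfolding connected_graph_def connected_in_def vS' by simp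
          then have "(step_in S' (verts S))\<^sup>*\<^sup>* x y" by (rule rtc_lift) (auto intro: st)
          then show "(step_in S' (verts S'))\<^sup>*\<^sup>* x y" unfolding vS' .
        qed
      qed
      moreover have "(\<Sum>e\<in>edges S'. l e) \<le> (\<Sum>e\<in>edges S. l e)" unfolding S'_def by simp
      ultimately show ?thesis using AS vS' by blast
    next
      case True
      define V' where "V' = verts S - {u}"
      define R where "R q = {y. (step_in S V')\<^sup>*\<^sup>* q y}" for q
      define Nb where "Nb = {q. \<exists>e\<in>edges S. ends G' e = {u,q}}"
      have RV: "R q \<subseteq> V'" if "q \<in> V'" for q using rtc_stay that unfolding R_def by blast
      have V'H: "V' \<subseteq> verts H" using vS unfolding V'_def by auto
      have reach: "y = u \<or> (\<exists>q. q \<in> Nb \<and> q \<in> V' \<and> y \<in> R q)" if "(step_in S (verts S))\<^sup>*\<^sup>* u y" for y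
        using that
      proof (induction rule: rtranclp_induct)
        case base then show ?case by simp
      next
        case (step y z)
        obtain e where e: "y \<in> verts S" "z \<in> verts S" "e \<in> edges S" "ends S e = {y,z}"
          using step(2) unfolding step_in_def by blast
        show ?case
        proof (cases "z = u")
          case True then show ?thesis by simp
        next
          case zu: False
          show ?thesis
          proof (cases "y = u")
            case True
            have "ends G' e = {u,z}" using e enS True by simp
            then have "z \<in> Nb" unfolding Nb_def using e(3) by blast
            moreover have "z \<in> V'" using e zu unfolding V'_def by simp
            moreover have "z \<in> R z" unfolding R_def by simp
            ultimately show ?thesis by blast
          next
            case yu: False
            then obtain q where q: "q \<in> Nb" "q \<in> V'" "y \<in> R q" using step(3) by blast
            have "step_in S V' y z" unfolding step_in_def V'_def using e yu zu by blast
            then have "z \<in> R q" using q(3) unfolding R_def by (simp add: rtranclp.rtrancl_into_rtrancl)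
            then show ?thesis using q by blast
          qed
        qed
      qed
      have fa: "\<exists>q. q \<in> Nb \<and> q \<in> V' \<and> a \<in> R q" if aA: "a \<in> A" for a
      proof -
        have av: "a \<in> verts S" "a \<noteq> u" using aA AS AH u_notin by auto
        moreover have "(step_in S (verts S))\<^sup>*\<^sup>* u a"
          using cS True av(1) unfolding connected_graph_def connected_in_def by blast
        ultimately show ?thesis using reach by blast
      qed
      define f where "f a = (SOME q. q \<in> Nb \<and> q \<in> V' \<and> a \<in> R q)" for a
      have f: "f a \<in> Nb \<and> f a \<in> V' \<and> a \<in> R (f a)" if aA: "a \<in> A" for a
        unfolding f_def by (rule someI_ex) (rule fa[OF aA])
      define Q where "Q = f ` A"
      have finA: "finite A" using AH finH finite_subset by blast
      have cQ: "card Q \<le> k" unfolding Q_def using card_image_le[OF finA, of f] cA by linarith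
      have Qne: "Q \<noteq> {}" using Ane unfolding Q_def by simp
      have finQ: "finite Q" using finA unfolding Q_def by simp
      have nbp: "\<exists>e. e \<in> edges S \<and> E0 \<le> e \<and> ends G' e = {u,q} \<and> q \<in> p ` {..k}" if qq: "q \<in> Nb" "q \<in> V'" for q
      proof -
        obtain e where e: "e \<in> edges S" "ends G' e = {u,q}" using qq(1) unfolding Nb_def by blast
        have "e \<notin> edges H"
        proof
          assume eh: "e \<in> edges H"
          then have "ends G' e \<subseteq> verts H" using ends_G'_H gH unfolding is_graph_def by auto
          then show False using e(2) u_notin by auto
        qed
        then have n: "E0 \<le> e" "e - E0 \<le> k" "ends G' e = {u, p (e - E0)}" using notH eS e(1) by auto
        have "q \<noteq> u" using qq(2) unfolding V'_def by simp
        then have "q = p (e - E0)" using n(3) e(2) by (metis doubleton_eq_iff)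
        then show ?thesis using e n by auto
      qed
      have Qp: "Q \<subseteq> p ` {..k}" using nbp f unfolding Q_def by blast
      obtain T where T: "subgraph T H" "connected_graph T" "Q \<subseteq> verts T" "(\<Sum>e\<in>edges T. l e) \<le> cc * real (card Q)"
        using T_exists[OF Qp Qne cQ] by blast
      define ge where "ge q = (SOME e. e \<in> edges S \<and> E0 \<le> e \<and> ends G' e = {u,q})" for q
      have ge: "ge q \<in> edges S \<and> E0 \<le> ge q \<and> ends G' (ge q) = {u,q}" if qQ: "q \<in> Q" for q
      proof -
        have "q \<in> Nb" "q \<in> V'" using qQ f unfolding Q_def by auto
        then have "\<exists>e. e \<in> edges S \<and> E0 \<le> e \<and> ends G' e = {u,q}" using nbp by blast
        then show ?thesis unfolding ge_def by (rule someI_ex)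
      qed
      have Qu: "u \<notin> Q"
      proof
        assume "u \<in> Q"
        then obtain a where "a \<in> A" "u = f a" unfolding Q_def by blast
        then have "u \<in> V'" using f by metis
        then show False unfolding V'_def by simp
      qed
      have ge_inj: "inj_on ge Q"
      proof (rule inj_onI)
        fix q q' assume qs: "q \<in> Q" "q' \<in> Q" "ge q = ge q'"
        then have "{u,q} = {u,q'}" using ge by metis
        then show "q = q'" using Qu qs by (metis doubleton_eq_iff)
      qed
      define Eq where "Eq q = {e \<in> edges S. ends G' e \<subseteq> R q}" for q
      define EU where "EU = (\<Union>q\<in>Q. Eq q)"
      define RU where "RU = (\<Union>q\<in>Q. R q)"
      have QV': "Q \<subseteq> V'" using f unfolding Q_def by auto
      have RUV: "RU \<subseteq> V'" using RV QV' unfolding RU_def by blast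
      have EUS: "EU \<subseteq> edges S" unfolding EU_def Eq_def by auto
      have EUH: "EU \<subseteq> edges H"
      proof
        fix e assume e: "e \<in> EU"
        then obtain q where q: "q \<in> Q" "e \<in> edges S" "ends G' e \<subseteq> R q" unfolding EU_def Eq_def by blast
        show "e \<in> edges H"
        proof (rule ccontr)
          assume "e \<notin> edges H"
          then have "u \<in> ends G' e" using notH eS q(2) by auto
          then have "u \<in> V'" using q RV QV' by blast
          then show False unfolding V'_def by simp
        qed
      qed
      have endsEU: "ends H e \<subseteq> RU" if eEU: "e \<in> EU" for e
      proof -
        obtain q where q: "q \<in> Q" "ends G' e \<subseteq> R q" using eEU unfolding EU_def Eq_def by blast
        have "ends G' e = ends H e" using ends_G'_H EUH eEU by blast
        then show ?thesis using q unfolding RU_def by blast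
      qed
      have gT: "is_graph T" "verts T \<subseteq> verts H" "edges T \<subseteq> edges H" "\<And>e. e \<in> edges T \<Longrightarrow> ends T e = ends H e"
        using T(1) unfolding subgraph_def by auto
      have endsT: "ends H e \<subseteq> verts T" if eT: "e \<in> edges T" for e using gT eT unfolding is_graph_def by auto
      define S' where "S' = mkH (verts T \<union> RU) (edges T \<union> EU)"
      have subS': "subgraph S' H" unfolding S'_def
      proof (rule mkH_sub)
        show "verts T \<union> RU \<subseteq> verts H" using gT(2) RUV V'H by blast
        show "edges T \<union> EU \<subseteq> edges H" using gT(3) EUH by blast
        fix e assume "e \<in> edges T \<union> EU"
        then show "ends H e \<subseteq> verts T \<union> RU" using endsT endsEU by blast
      qed
      have vS': "verts S' = verts T \<union> RU" unfolding S'_def by simp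
      have AS': "A \<subseteq> verts S'"
      proof
        fix a assume "a \<in> A"
        then have "a \<in> R (f a)" "f a \<in> Q" using f unfolding Q_def by auto
        then show "a \<in> verts S'" unfolding vS' RU_def by blast
      qed
      obtain r where r: "r \<in> Q" using Qne by blast
      have stT: "step_in S' (verts S') a b" if sT: "step_in T (verts T) a b" for a b
      proof -
        obtain e where e: "a \<in> verts T" "b \<in> verts T" "e \<in> edges T" "ends T e = {a,b}"
          using sT unfolding step_in_def by blast
        then have "ends S' e = {a,b}" "e \<in> edges S'" using gT(4) unfolding S'_def by auto
        then show ?thesis unfolding step_in_def vS' using e by blast
      qed
      have reachT: "(step_in S' (verts S'))\<^sup>*\<^sup>* r v" if vT: "v \<in> verts T" for v
      proof -
        have "(step_in T (verts T))\<^sup>*\<^sup>* r v" using T(2) T(3) r vT unfolding connected_graph_def connected_in_def by blast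
        then show ?thesis by (rule rtc_lift) (auto intro: stT)
      qed
      have reachR: "(step_in S' (verts S'))\<^sup>*\<^sup>* q v" if qv: "q \<in> Q" "v \<in> R q" for q v
      proof -
        have st: "step_in S' (verts S') a b" if ab: "(step_in S V')\<^sup>*\<^sup>* q a" "step_in S V' a b" for a b
        proof -
          obtain e where e: "a \<in> V'" "b \<in> V'" "e \<in> edges S" "ends S e = {a,b}"
            using ab(2) unfolding step_in_def by blast
          have aR: "a \<in> R q" using ab(1) unfolding R_def by simp
          have bR: "b \<in> R q" using ab unfolding R_def by (simp add: rtranclp.rtrancl_into_rtrancl)
          have eG: "ends G' e = {a,b}" using e enS by simp
          then have "e \<in> Eq q" unfolding Eq_def using e(3) aR bR by simp
          then have eEU: "e \<in> EU" using qv(1) unfolding EU_def by blast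
          then have "ends H e = {a,b}" using EUH ends_G'_H eG by auto
          then have "ends S' e = {a,b}" unfolding S'_def by simp
          moreover have "a \<in> verts S'" "b \<in> verts S'" using aR bR qv(1) unfolding vS' RU_def by blast+
          moreover have "e \<in> edges S'" using eEU unfolding S'_def by simp
          ultimately show ?thesis unfolding step_in_def by blast
        qed
        have "(step_in S V')\<^sup>*\<^sup>* q v" using qv(2) unfolding R_def by simp
        then show ?thesis by (rule rtc_lift) (auto intro: st)
      qed
      have conS': "connected_graph S'"
        unfolding connected_graph_def
      proof (rule connected_root[of "verts S'" _ r])
        fix v assume "v \<in> verts S'"
        then consider "v \<in> verts T" | q where "q \<in> Q" "v \<in> R q" unfolding vS' RU_def by blast
        then show "(step_in S' (verts S'))\<^sup>*\<^sup>* r v"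
        proof cases
          case 1 then show ?thesis by (rule reachT)
        next
          case 2
          have "q \<in> verts T" using 2(1) T(3) by blast
          then show ?thesis using reachT reachR[OF 2] by (meson rtranclp_trans)
        qed
      qed
      have finEU: "finite EU" using EUS finS finite_subset by blast
      have finT: "finite (edges T)" using gT(1) unfolding is_graph_def by auto
      have c1: "(\<Sum>e\<in>edges S'. l e) \<le> (\<Sum>e\<in>edges T. l e) + (\<Sum>e\<in>EU. l e)"
        unfolding S'_def mkH_sel by (rule sum_Un_le_pos[OF finT finEU]) (rule l_nn)
      have geS: "ge ` Q \<subseteq> edges S" using ge by blast
      have disj2: "ge ` Q \<inter> EU = {}"
      proof -
        have "x \<notin> EU" if xg: "x \<in> ge ` Q" for x
        proof
          assume "x \<in> EU"
          then have "x < E0" using EUH E0_gt by blast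
          moreover obtain q where "q \<in> Q" "x = ge q" using xg by blast
          ultimately show False using ge by fastforce
        qed
        then show ?thesis by blast
      qed
      have c2: "(\<Sum>e\<in>ge ` Q \<union> EU. l e) \<le> (\<Sum>e\<in>edges S. l e)"
        by (rule sum_mono2[OF finS]) (use geS EUS l_nn in auto)
      have c3: "(\<Sum>e\<in>ge ` Q \<union> EU. l e) = (\<Sum>e\<in>ge ` Q. l e) + (\<Sum>e\<in>EU. l e)"
        by (rule sum.union_disjoint) (use finQ finEU disj2 in auto)
      have c4: "(\<Sum>e\<in>ge ` Q. l e) = (\<Sum>q\<in>Q. l (ge q))"
        using sum.reindex[OF ge_inj, of l] by (simp add: comp_def)
      have c5: "(\<Sum>q\<in>Q. l (ge q)) = (\<Sum>q\<in>Q. cc)"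
        by (rule sum.cong) (auto simp: ge l_new)
      have c6: "(\<Sum>q\<in>Q. cc) = cc * real (card Q)" by simp
      have cost: "(\<Sum>e\<in>edges S'. l e) \<le> (\<Sum>e\<in>edges S. l e)"
        using c1 c2 c3 c4 c5 c6 T(4) by linarith
      show ?thesis using subS' conS' AS' cost by blast
    qed
  qed
qed

end

context ctx begin

lemma lower:
  assumes S: "subgraph S H" and cS: "connected_graph S" and AS: "insert alpha (zeta ` {..<k}) \<subseteq> verts S"
  shows "real k ^ 2 \<le> (\<Sum>e\<in>edges S. l e)"
proof -
  have gS: "is_graph S" and eSH: "edges S \<subseteq> edges H" and enS: "\<And>e. e \<in> edges S \<Longrightarrow> ends S e = ends H e"
    using S unfolding subgraph_def by auto
  have finS: "finite (edges S)" using gS unfolding is_graph_def by auto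
  have lS: "\<And>e. e \<in> edges S \<Longrightarrow> l e = lH e" using eSH l_H by blast
  have aS: "alpha \<in> verts S" and zS: "\<And>i. i < k \<Longrightarrow> zeta i \<in> verts S" using AS by auto
  show ?thesis
  proof (cases "\<exists>e\<in>edges S. \<not> (\<exists>i<k. conn False i e) \<and> \<not> (\<exists>i<k. conn True i e) \<and> \<not> internal e")
    case True
    then obtain e where e: "e \<in> edges S" "\<not> (\<exists>i<k. conn False i e)" "\<not> (\<exists>i<k. conn True i e)" "\<not> internal e"
      by blast
    have "l e = real k ^ 2" unfolding lS[OF e(1)] lH_def
      by (subst if_not_P[OF e(2)], subst if_not_P[OF e(3)], subst if_not_P[OF e(4)]) simp
    moreover have "l e \<le> (\<Sum>e\<in>edges S. l e)" by (rule member_le_sum) (use e(1) finS l_nn in auto)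
    ultimately show ?thesis by simp
  next
    case False
    then have allc: "\<And>e. e \<in> edges S \<Longrightarrow> (\<exists>i<k. conn False i e) \<or> (\<exists>i<k. conn True i e) \<or> internal e"
      by blast
    define C where "C i = {e\<in>edges S. conn False i e \<or> conn True i e}" for i
    have finC: "finite (C i)" for i using finS unfolding C_def by simp
    have Cdisj: "C i \<inter> C j = {}" if "i < k" "j < k" "i \<noteq> j" for i j
      using conn_uniq that unfolding C_def by blast
    have sumC: "(\<Sum>i<k. (\<Sum>e\<in>C i. l e)) \<le> (\<Sum>e\<in>edges S. l e)"
    proof -
      have "(\<Sum>i<k. (\<Sum>e\<in>C i. l e)) = (\<Sum>e\<in>(\<Union>i<k. C i). l e)"
        by (rule sum.UNION_disjoint[symmetric]) (use finC Cdisj in auto)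
      also have "\<dots> \<le> (\<Sum>e\<in>edges S. l e)"
        by (rule sum_mono2[OF finS]) (use l_nn in \<open>auto simp: C_def\<close>)
      finally show ?thesis .
    qed
    have lC: "real k - 1 \<le> l e" if "e \<in> C i" "i < k" for e i
      using that lS lH_a lH_b unfolding C_def by fastforce
    have lCa: "l e = real k" if "e \<in> edges S" "conn False i e" "i < k" for e i
      using that lS lH_a by simp
    \<comment> \<open>every z-branch set is left by an edge of S\<close>
    have Cne: "\<exists>e. e \<in> C i" if ik: "i < k" for i
    proof -
      have an: "alpha \<notin> B (Inr i)" using alpha_in disj[of "Inl False" "Inr i" alpha] ik by auto
      obtain e p q where e: "e \<in> edges S" "ends S e = {p,q}" "p \<in> B (Inr i)" "q \<notin> B (Inr i)"
        using cut_edge[OF cS zS[OF ik] zeta_in[OF ik] aS an] by blast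
      have eH: "ends H e = {p,q}" using e enS by simp
      have "conn False i e \<or> conn True i e"
      proof -
        consider (a) j where "j < k" "conn False j e" | (b) j where "j < k" "conn True j e" | (c) "internal e"
          using allc[OF e(1)] by blast
        then show ?thesis
        proof cases
          case (c)
          then obtain w where w: "w \<in> W0" "ends H e \<subseteq> B w" unfolding internal_def by blast
          then have "p \<in> B w" "q \<in> B w" using eH by auto
          then have "w = Inr i" using disj[of w "Inr i" p] w(1) e(3) ik by auto
          then show ?thesis using \<open>q \<in> B w\<close> e(4) by simp
        next
          case (a)
          then obtain x y where xy: "x \<in> B (Inl False)" "y \<in> B (Inr j)" "ends H e = {x,y}" unfolding conn_def by blast
          then have "p = x \<or> p = y" using eH by auto
          moreover have "p \<noteq> x" using disj[of "Inl False" "Inr i" x] xy(1) e(3) ik by auto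
          ultimately have "p = y" by simp
          then have "j = i" using disj[of "Inr j" "Inr i" y] xy(2) e(3) ik a(1) by auto
          then show ?thesis using a by simp
        next
          case (b)
          then obtain x y where xy: "x \<in> B (Inl True)" "y \<in> B (Inr j)" "ends H e = {x,y}" unfolding conn_def by blast
          then have "p = x \<or> p = y" using eH by auto
          moreover have "p \<noteq> x" using disj[of "Inl True" "Inr i" x] xy(1) e(3) ik by auto
          ultimately have "p = y" by simp
          then have "j = i" using disj[of "Inr j" "Inr i" y] xy(2) e(3) ik b(1) by auto
          then show ?thesis using b by simp
        qed
      qed
      then show ?thesis using e(1) unfolding C_def by blast
    qed
    have sC1: "real k - 1 \<le> (\<Sum>e\<in>C i. l e)" if ik: "i < k" for i
    proof -
      obtain e where e: "e \<in> C i" using Cne[OF ik] by blast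
      have "l e \<le> (\<Sum>e\<in>C i. l e)" by (rule member_le_sum) (use e finC l_nn in auto)
      then show ?thesis using lC[OF e ik] by simp
    qed
    show ?thesis
    proof (cases "\<forall>i<k. \<exists>e\<in>edges S. conn False i e")
      case True
      have "real k \<le> (\<Sum>e\<in>C i. l e)" if ik: "i < k" for i
      proof -
        obtain e where e: "e \<in> edges S" "conn False i e" using True ik by blast
        then have eC: "e \<in> C i" unfolding C_def by simp
        have "l e \<le> (\<Sum>e\<in>C i. l e)" by (rule member_le_sum) (use eC finC l_nn in auto)
        then show ?thesis using lCa[OF e ik] by simp
      qed
      then have "(\<Sum>i<k. real k) \<le> (\<Sum>i<k. (\<Sum>e\<in>C i. l e))" by (intro sum_mono) auto
      then show ?thesis using sumC by (simp add: power2_eq_square)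
    next
      case False
      then obtain i0 where i0: "i0 < k" "\<not> (\<exists>e\<in>edges S. conn False i0 e)" by blast
      define J where "J = {i. i < k \<and> \<not> (\<exists>e\<in>edges S. conn False i e)}"
      define X where "X = B (Inl True) \<union> (\<Union>j\<in>J. B (Inr j))"
      have zX: "zeta i0 \<in> X" using i0 zeta_in[OF i0(1)] unfolding X_def J_def by blast
      have aX: "alpha \<notin> X"
      proof
        assume "alpha \<in> X"
        then consider "alpha \<in> B (Inl True)" | j where "j \<in> J" "alpha \<in> B (Inr j)" unfolding X_def by blast
        then show False
        proof cases
          case 1 then show False using disj[of "Inl False" "Inl True" alpha] alpha_in by auto
        next
          case 2 then show False using disj[of "Inl False" "Inr j" alpha] alpha_in unfolding J_def by auto
        qed
      qed
      obtain e p q where e: "e \<in> edges S" "ends S e = {p,q}" "p \<in> X" "q \<notin> X"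
        using cut_edge[OF cS zS[OF i0(1)] zX aS aX] by blast
      have eH: "ends H e = {p,q}" using e enS by simp
      have memX: "w = Inl True \<or> (\<exists>j\<in>J. w = Inr j)" if "x \<in> X" "x \<in> B w" "w \<in> W0" for x w
      proof -
        from that(1) consider "x \<in> B (Inl True)" | j where "j \<in> J" "x \<in> B (Inr j)" unfolding X_def by blast
        then show ?thesis
        proof cases
          case 1 then show ?thesis using disj[of w "Inl True" x] that by auto
        next
          case 2 then have "j < k" unfolding J_def by simp
          then show ?thesis using disj[of w "Inr j" x] that 2 by auto
        qed
      qed
      have BX: "B w \<subseteq> X" if "w = Inl True \<or> (\<exists>j\<in>J. w = Inr j)" for w
        using that unfolding X_def by auto
      obtain i1 where i1: "i1 < k" "i1 \<notin> J" "conn True i1 e"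
      proof -
        consider (a) j where "j < k" "conn False j e" | (b) j where "j < k" "conn True j e" | (c) "internal e"
          using allc[OF e(1)] by blast
        then show ?thesis
        proof cases
          case (c)
          then obtain w where w: "w \<in> W0" "ends H e \<subseteq> B w" unfolding internal_def by blast
          then have "p \<in> B w" "q \<in> B w" using eH by auto
          then have "B w \<subseteq> X" using memX[OF e(3) _ w(1)] BX by blast
          then show ?thesis using \<open>q \<in> B w\<close> e(4) by blast
        next
          case (a)
          then obtain x y where xy: "x \<in> B (Inl False)" "y \<in> B (Inr j)" "ends H e = {x,y}" unfolding conn_def by blast
          have jJ: "j \<notin> J" using a e(1) unfolding J_def by blast
          have "p = x \<or> p = y" using eH xy(3) by auto
          then show ?thesis
          proof
            assume "p = x"
            then show ?thesis using memX[OF e(3), of "Inl False"] xy(1) by auto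
          next
            assume "p = y"
            then show ?thesis using memX[OF e(3), of "Inr j"] xy(2) inW0(2)[OF a(1)] jJ by auto
          qed
        next
          case (b)
          then obtain x y where xy: "x \<in> B (Inl True)" "y \<in> B (Inr j)" "ends H e = {x,y}" unfolding conn_def by blast
          have "q = x \<or> q = y" using eH xy(3) by auto
          moreover have "q \<noteq> x" using e(4) xy(1) unfolding X_def by blast
          ultimately have "q = y" by simp
          then have "j \<notin> J" using e(4) xy(2) unfolding X_def by blast
          then show ?thesis using that b by blast
        qed
      qed
      obtain e' where e': "e' \<in> edges S" "conn False i1 e'" using i1 unfolding J_def by blast
      have ne: "e \<noteq> e'" using conn_uniq[of True i1 e False i1] i1 e' by auto
      have sub2: "{e, e'} \<subseteq> C i1" using e(1) e' i1(3) unfolding C_def by blast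
      have "l e + l e' = (\<Sum>x\<in>{e,e'}. l x)" using ne by simp
      also have "\<dots> \<le> (\<Sum>x\<in>C i1. l x)" by (rule sum_mono2[OF finC sub2]) (rule l_nn)
      finally have s1: "l e + l e' \<le> (\<Sum>x\<in>C i1. l x)" .
      have le: "l e = real k - 1" using lS[OF e(1)] lH_b[OF i1(1) i1(3)] by simp
      have le': "l e' = real k" using lCa[OF e' i1(1)] .
      have "(\<Sum>i<k. (\<Sum>e\<in>C i. l e)) = (\<Sum>e\<in>C i1. l e) + (\<Sum>i\<in>{..<k} - {i1}. (\<Sum>e\<in>C i. l e))"
        by (rule sum.remove) (use i1 in auto)
      moreover have "(\<Sum>i\<in>{..<k} - {i1}. real k - 1) \<le> (\<Sum>i\<in>{..<k} - {i1}. (\<Sum>e\<in>C i. l e))"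
        by (rule sum_mono) (use sC1 in auto)
      moreover have "(\<Sum>i\<in>{..<k} - {i1}. real k - 1) = (real k - 1) * (real k - 1)"
        using i1(1) by (simp add: card_Diff_singleton of_nat_diff)
      ultimately have "2 * real k - 1 + (real k - 1) * (real k - 1) \<le> (\<Sum>i<k. (\<Sum>e\<in>C i. l e))"
        using s1 le le' by linarith
      moreover have "2 * real k - 1 + (real k - 1) * (real k - 1) = real k ^ 2"
        by (simp add: power2_eq_square algebra_simps)
      ultimately show ?thesis using sumC by linarith
    qed
  qed
qed

end

context ctx begin

lemma kgeo: "k_geodesic k H G' l"
  unfolding k_geodesic_def
proof (intro allI impI)
  fix A assume A: "A \<subseteq> verts H \<and> card A \<le> k"
  have "sd G' l A \<le> sd H l A"
    by (rule sd_mono) (use sub_lift in blast)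
  moreover have "sd H l A \<le> sd G' l A"
    by (rule sd_mono) (use replace A in blast)
  ultimately show "sd H l A = sd G' l A" by simp
qed

definition "S0 = \<lparr>verts = insert u (p ` {..k}), edges = {E0..E0+k}, ends = ends G'\<rparr>"

lemma S0_sub: "subgraph S0 G'"
proof -
  have pv: "p ` {..k} \<subseteq> verts H" using p_verts by auto
  have ee: "ends G' e \<subseteq> insert u (p ` {..k}) \<and> card (ends G' e) = 2" if "e \<in> {E0..E0+k}" for e
  proof -
    have e: "E0 \<le> e" "e - E0 \<le> k" using that by auto
    then have "ends G' e = {u, p (e - E0)}" unfolding G'_sel by simp
    moreover have "p (e - E0) \<noteq> u" using p_ne_u e by simp
    ultimately show ?thesis using e by auto
  qed
  have "is_graph S0" unfolding is_graph_def S0_def using ee by auto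
  then show ?thesis unfolding subgraph_def S0_def using gG' pv unfolding G'_sel by auto
qed

lemma S0_conn: "connected_graph S0"
  unfolding connected_graph_def
proof (rule connected_root[of _ _ u])
  fix v assume "v \<in> verts S0"
  then consider "v = u" | j where "j \<le> k" "v = p j" unfolding S0_def by auto
  then show "(step_in S0 (verts S0))\<^sup>*\<^sup>* u v"
  proof cases
    case 1 then show ?thesis by simp
  next
    case 2
    have "ends G' (E0 + j) = {u, p j}" unfolding G'_sel by simp
    moreover have "E0 + j \<in> edges S0" using 2 unfolding S0_def by simp
    moreover have "u \<in> verts S0" "v \<in> verts S0" using 2 unfolding S0_def by auto
    ultimately have "step_in S0 (verts S0) u v" unfolding step_in_def S0_def using 2 by auto
    then show ?thesis by simp
  qed
qed

lemma S0_cost: "(\<Sum>e\<in>edges S0. l e) = real (k + 1) * cc"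
proof -
  have "(\<Sum>e\<in>edges S0. l e) = (\<Sum>e\<in>{E0..E0+k}. cc)" unfolding S0_def
    by (rule sum.cong) (auto simp: l_new)
  then show ?thesis by simp
qed

lemma not_full: "\<not> fully_geodesic H G' l"
proof
  assume "fully_geodesic H G' l"
  then have kg: "k_geodesic (k+1) H G' l" unfolding fully_geodesic_def by blast
  define A0 where "A0 = insert alpha (zeta ` {..<k})"
  have A0H: "A0 \<subseteq> verts H" unfolding A0_def using p_img p_verts by (metis atMost_iff image_subset_iff)
  have cA0: "card A0 = k + 1" unfolding A0_def using alpha_notin zeta_inj by (simp add: card_image)
  have eq: "sd H l A0 = sd G' l A0" using kg A0H cA0 unfolding k_geodesic_def by simp
  have "ereal (real k ^ 2) \<le> sd H l A0"
    by (rule sd_ge) (use lower A0_def in blast)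
  moreover have "sd G' l A0 \<le> ereal (\<Sum>e\<in>edges S0. l e)"
    by (rule sd_le[OF S0_sub S0_conn]) (auto simp: S0_def A0_def p_img[symmetric])
  moreover have "(\<Sum>e\<in>edges S0. l e) < real k ^ 2"
  proof -
    have "real (k + 1) * cc = (real k + 1) * (real k - 1) + (real k + 1) * dlt" unfolding cc_def
      by (simp add: algebra_simps)
    also have "\<dots> = real k ^ 2 - 1 / 2" using dlt_small by (simp add: power2_eq_square algebra_simps)
    finally show ?thesis using S0_cost by simp
  qed
  ultimately have "ereal (real k ^ 2) \<le> ereal (\<Sum>e\<in>edges S0. l e)" "(\<Sum>e\<in>edges S0. l e) < real k ^ 2"
    using eq order_trans by metis+
  then show False by simp
qed

lemma main: "subgraph H G' \<and> length_fun G' l \<and> k_geodesic k H G' l \<and> \<not> fully_geodesic H G' l"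
  using subHG lfun kgeo not_full by blast

end

theorem corollary6p8:
  fixes k :: nat and G :: mgraph
  assumes "k \<ge> 2" and "G \<in> class_H k"
  shows "\<not> has_K2n_minor G (k + 2)"
proof
  assume "has_K2n_minor G (k + 2)"
  then obtain B :: "bool + nat \<Rightarrow> nat set" where B:
    "\<forall>w\<in>K2_verts (k+2). B w \<noteq> {} \<and> B w \<subseteq> verts G \<and> connected_in G (B w)"
    "\<forall>w\<in>K2_verts (k+2). \<forall>w'\<in>K2_verts (k+2). w \<noteq> w' \<longrightarrow> B w \<inter> B w' = {}"
    "\<forall>w\<in>K2_verts (k+2). \<forall>w'\<in>K2_verts (k+2). K2_adj w w' \<longrightarrow>
        (\<exists>e\<in>edges G. \<exists>x\<in>B w. \<exists>y\<in>B w'. ends G e = {x, y})"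
    unfolding has_K2n_minor_def has_minor_def by blast
  have gG: "is_graph G" and cl: "\<forall>G' l. subgraph G G' \<and> length_fun G' l \<and> k_geodesic k G G' l \<longrightarrow> fully_geodesic G G' l"
    using assms(2) unfolding class_H_def by auto
  interpret c: ctx G k B
    by unfold_locales (use gG assms(1) B in auto)
  show False using c.main cl by blast
qed

end
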